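(* Let $\Pi$ be a finite projective plane of order $n\ge 2$ with point set $P$ and line set $L$. Let $G(\Pi)$ be the graph with vertex set $P\cup L$ in which $P$ is a clique, $L$ is a stable set, and a point $p\in P$ is adjacent to a line $\ell\in L$ iff $p$ is incident with $\ell$ in $\Pi$. Then $G(\Pi)$ is $\cap$-edge simplicial but not CIS.
   Context: A clique $C$ is simplicial if $C=N[v]$ for some vertex $v$; a graph is edge simplicial if every edge lies in a simplicial clique; it is $\cap$-edge simplicial if both it and its complement are edge simplicial. A graph is CIS if every maximal clique and every maximal stable set intersect. *)

theory Defs
  imports Main
begin

definition clique :: "'a set \<Rightarrow> ('a \<Rightarrow> 'a \<Rightarrow> bool) \<Rightarrow> 'a set \<Rightarrow> bool" where
  "clique V E C \<longleftrightarrow> C \<subseteq> V \<and> (\<forall>x\<in>C. \<forall>y\<in>C. x \<noteq> y \<longrightarrow> E x y)"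

definition stable_set :: "'a set \<Rightarrow> ('a \<Rightarrow> 'a \<Rightarrow> bool) \<Rightarrow> 'a set \<Rightarrow> bool" where
  "stable_set V E S \<longleftrightarrow> S \<subseteq> V \<and> (\<forall>x\<in>S. \<forall>y\<in>S. x \<noteq> y \<longrightarrow> \<not> E x y)"

definition maximal_clique :: "'a set \<Rightarrow> ('a \<Rightarrow> 'a \<Rightarrow> bool) \<Rightarrow> 'a set \<Rightarrow> bool" where
  "maximal_clique V E C \<longleftrightarrow> clique V E C \<and> (\<forall>D. clique V E D \<and> C \<subseteq> D \<longrightarrow> D = C)"

definition maximal_stable_set :: "'a set \<Rightarrow> ('a \<Rightarrow> 'a \<Rightarrow> bool) \<Rightarrow> 'a set \<Rightarrow> bool" where
  "maximal_stable_set V E S \<longleftrightarrow> stable_set V E S \<and> (\<forall>T. stable_set V E T \<and> S \<subseteq> T \<longrightarrow> T = S)"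

definition closed_nbhd :: "'a set \<Rightarrow> ('a \<Rightarrow> 'a \<Rightarrow> bool) \<Rightarrow> 'a \<Rightarrow> 'a set" where
  "closed_nbhd V E v = {u \<in> V. u = v \<or> E v u}"

definition simplicial_clique :: "'a set \<Rightarrow> ('a \<Rightarrow> 'a \<Rightarrow> bool) \<Rightarrow> 'a set \<Rightarrow> bool" where
  "simplicial_clique V E C \<longleftrightarrow> clique V E C \<and> (\<exists>v\<in>V. C = closed_nbhd V E v)"

definition edge_simplicial :: "'a set \<Rightarrow> ('a \<Rightarrow> 'a \<Rightarrow> bool) \<Rightarrow> bool" where
  "edge_simplicial V E \<longleftrightarrow>
     (\<forall>x\<in>V. \<forall>y\<in>V. x \<noteq> y \<and> E x y \<longrightarrow> (\<exists>C. simplicial_clique V E C \<and> x \<in> C \<and> y \<in> C))"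

definition compl_graph :: "('a \<Rightarrow> 'a \<Rightarrow> bool) \<Rightarrow> 'a \<Rightarrow> 'a \<Rightarrow> bool" where
  "compl_graph E x y \<longleftrightarrow> x \<noteq> y \<and> \<not> E x y"

definition cap_edge_simplicial :: "'a set \<Rightarrow> ('a \<Rightarrow> 'a \<Rightarrow> bool) \<Rightarrow> bool" where
  "cap_edge_simplicial V E \<longleftrightarrow> edge_simplicial V E \<and> edge_simplicial V (compl_graph E)"

definition CIS :: "'a set \<Rightarrow> ('a \<Rightarrow> 'a \<Rightarrow> bool) \<Rightarrow> bool" where
  "CIS V E \<longleftrightarrow> (\<forall>C S. maximal_clique V E C \<and> maximal_stable_set V E S \<longrightarrow> C \<inter> S \<noteq> {})"

definition projective_plane_of_order ::
  "'p set \<Rightarrow> 'l set \<Rightarrow> ('p \<Rightarrow> 'l \<Rightarrow> bool) \<Rightarrow> nat \<Rightarrow> bool" where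
  "projective_plane_of_order P L I n \<longleftrightarrow>
     finite P \<and> finite L \<and>
     (\<forall>p\<in>P. \<forall>q\<in>P. p \<noteq> q \<longrightarrow> (\<exists>!l. l \<in> L \<and> I p l \<and> I q l)) \<and>
     (\<forall>l\<in>L. \<forall>m\<in>L. l \<noteq> m \<longrightarrow> (\<exists>!p. p \<in> P \<and> I p l \<and> I p m)) \<and>
     (\<exists>F\<subseteq>P. card F = 4 \<and>
        (\<forall>l\<in>L. card {p\<in>F. I p l} \<le> 2)) \<and>
     (\<forall>l\<in>L. card {p\<in>P. I p l} = n + 1)"

definition Gvert :: "'p set \<Rightarrow> 'l set \<Rightarrow> ('p + 'l) set" where
  "Gvert P L = Inl ` P \<union> Inr ` L"

fun Gadj :: "('p \<Rightarrow> 'l \<Rightarrow> bool) \<Rightarrow> ('p + 'l) \<Rightarrow> ('p + 'l) \<Rightarrow> bool" where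
  "Gadj I (Inl p) (Inl q) = (p \<noteq> q)"
| "Gadj I (Inr l) (Inr m) = False"
| "Gadj I (Inl p) (Inr l) = I p l"
| "Gadj I (Inr l) (Inl p) = I p l"

end

theory Submission
  imports Defs
begin

lemma nb_line:
  assumes "l \<in> L"
  shows "closed_nbhd (Gvert P L) (Gadj I) (Inr l) = insert (Inr l) (Inl ` {p\<in>P. I p l})"
  using assms unfolding closed_nbhd_def Gvert_def
  by auto

lemma simp_line:
  assumes "l \<in> L"
  shows "simplicial_clique (Gvert P L) (Gadj I) (closed_nbhd (Gvert P L) (Gadj I) (Inr l))"
  unfolding simplicial_clique_def
proof
  show "clique (Gvert P L) (Gadj I) (closed_nbhd (Gvert P L) (Gadj I) (Inr l))"
    unfolding nb_line[OF assms] clique_def using assms by (auto simp: Gvert_def)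
  show "\<exists>v\<in>Gvert P L. closed_nbhd (Gvert P L) (Gadj I) (Inr l) = closed_nbhd (Gvert P L) (Gadj I) v"
    using assms by (auto simp: Gvert_def)
qed

lemma nb_point:
  assumes "p \<in> P"
  shows "closed_nbhd (Gvert P L) (compl_graph (Gadj I)) (Inl p) = insert (Inl p) (Inr ` {l\<in>L. \<not> I p l})"
  using assms unfolding closed_nbhd_def Gvert_def compl_graph_def
  by auto

lemma simp_point:
  assumes "p \<in> P"
  shows "simplicial_clique (Gvert P L) (compl_graph (Gadj I)) (closed_nbhd (Gvert P L) (compl_graph (Gadj I)) (Inl p))"
  unfolding simplicial_clique_def
proof
  show "clique (Gvert P L) (compl_graph (Gadj I)) (closed_nbhd (Gvert P L) (compl_graph (Gadj I)) (Inl p))"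
    unfolding nb_point[OF assms] clique_def compl_graph_def using assms by (auto simp: Gvert_def)
  show "\<exists>v\<in>Gvert P L. closed_nbhd (Gvert P L) (compl_graph (Gadj I)) (Inl p) = closed_nbhd (Gvert P L) (compl_graph (Gadj I)) v"
    using assms by (auto simp: Gvert_def)
qed

lemma card3_other:
  assumes "finite S" "card S \<ge> 3"
  shows "\<exists>c\<in>S. c \<noteq> a \<and> c \<noteq> b"
proof (rule ccontr)
  assume "\<not> ?thesis"
  then have "S \<subseteq> {a,b}" by auto
  then have "card S \<le> card {a,b}" by (intro card_mono) auto
  also have "\<dots> \<le> 2" by (simp add: card_insert_if)
  finally show False using assms by simp
qed

lemma off_two:
  assumes pp: "projective_plane_of_order P L I n" and n: "n \<ge> 2"
    and l: "l \<in> L" and m: "m \<in> L" and lm: "l \<noteq> m"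
  shows "\<exists>p\<in>P. \<not> I p l \<and> \<not> I p m"
proof -
  have fP: "finite P" using pp unfolding projective_plane_of_order_def by blast
  have pts: "\<And>p q. p\<in>P \<Longrightarrow> q\<in>P \<Longrightarrow> p \<noteq> q \<Longrightarrow> \<exists>!l. l \<in> L \<and> I p l \<and> I q l"
    using pp unfolding projective_plane_of_order_def by blast
  have lns: "\<And>l m. l\<in>L \<Longrightarrow> m\<in>L \<Longrightarrow> l \<noteq> m \<Longrightarrow> \<exists>!p. p \<in> P \<and> I p l \<and> I p m"
    using pp unfolding projective_plane_of_order_def by blast
  have cd: "\<And>l. l\<in>L \<Longrightarrow> card {p\<in>P. I p l} = n + 1"
    using pp unfolding projective_plane_of_order_def by blast
  have fin: "\<And>l. finite {p\<in>P. I p l}" using fP by simp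
  obtain x where x: "x \<in> P" "I x l" "I x m" using lns[OF l m lm] by blast
  obtain a where a: "a \<in> {p\<in>P. I p l}" "a \<noteq> x" "a \<noteq> x"
    using card3_other[OF fin, of l x x] cd[OF l] n by auto
  obtain b where b: "b \<in> {p\<in>P. I p m}" "b \<noteq> x" "b \<noteq> x"
    using card3_other[OF fin, of m x x] cd[OF m] n by auto
  have aNm: "\<not> I a m" using lns[OF l m lm] x a by blast
  have bNl: "\<not> I b l" using lns[OF l m lm] x b by blast
  have ab: "a \<noteq> b" using aNm b by auto
  obtain k where k: "k \<in> L" "I a k" "I b k" using pts[of a b] a b ab by blast
  obtain c where c: "c \<in> {p\<in>P. I p k}" "c \<noteq> a" "c \<noteq> b"
    using card3_other[OF fin, of k a b] cd[OF k(1)] n by auto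
  have kl: "k \<noteq> l" using k bNl by auto
  have km: "k \<noteq> m" using k aNm by auto
  have "\<not> I c l"
  proof
    assume "I c l"
    then show False using lns[OF k(1) l kl] a c k by blast
  qed
  moreover have "\<not> I c m"
  proof
    assume "I c m"
    then show False using lns[OF k(1) m km] b c k by blast
  qed
  ultimately show ?thesis using c by blast
qed

lemma in_nb_line:
  assumes "l \<in> L"
  shows "Inr l \<in> closed_nbhd (Gvert P L) (Gadj I) (Inr l)"
    "\<And>p. p \<in> P \<Longrightarrow> I p l \<Longrightarrow> Inl p \<in> closed_nbhd (Gvert P L) (Gadj I) (Inr l)"
  using assms by (simp_all add: nb_line)

lemma in_nb_point:
  assumes "p \<in> P"
  shows "Inl p \<in> closed_nbhd (Gvert P L) (compl_graph (Gadj I)) (Inl p)"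
    "\<And>l. l \<in> L \<Longrightarrow> \<not> I p l \<Longrightarrow> Inr l \<in> closed_nbhd (Gvert P L) (compl_graph (Gadj I)) (Inl p)"
  using assms by (simp_all add: nb_point)

theorem proposition31:
  fixes P :: "'p set" and L :: "'l set" and I :: "'p \<Rightarrow> 'l \<Rightarrow> bool" and n :: nat
  assumes "projective_plane_of_order P L I n" and "n \<ge> 2"
  shows "cap_edge_simplicial (Gvert P L) (Gadj I) \<and> \<not> CIS (Gvert P L) (Gadj I)"
proof -
  note pp = assms(1)
  have pts: "\<And>p q. p\<in>P \<Longrightarrow> q\<in>P \<Longrightarrow> p \<noteq> q \<Longrightarrow> \<exists>!l. l \<in> L \<and> I p l \<and> I q l"
    using pp unfolding projective_plane_of_order_def by blast
  have "\<exists>F\<subseteq>P. card F = 4 \<and> (\<forall>l\<in>L. card {p\<in>F. I p l} \<le> 2)"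
    using pp unfolding projective_plane_of_order_def by (elim conjE)
  then obtain F where F: "F \<subseteq> P" "card F = 4" "\<forall>l\<in>L. card {p\<in>F. I p l} \<le> 2"
    by blast
  have fF: "finite F" by (rule card_ge_0_finite) (simp add: F(2))
  have offl: "\<exists>p\<in>P. \<not> I p l" if l: "l \<in> L" for l
  proof (rule ccontr)
    assume "\<not> ?thesis"
    then have "{p\<in>F. I p l} = F" using F(1) by auto
    moreover have "card {p\<in>F. I p l} \<le> 2" using F(3) l by blast
    ultimately show False using F(2) by simp
  qed
  have online: "\<exists>l\<in>L. I p l" if p: "p \<in> P" for p
  proof -
    have "\<exists>q\<in>F. q \<noteq> p" using card3_other[OF fF, of p p] F(2) by auto
    then obtain q where "q \<in> P" "q \<noteq> p" using F(1) by blast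
    then show ?thesis using pts[of p q] p by blast
  qed
  have es1: "edge_simplicial (Gvert P L) (Gadj I)"
    unfolding edge_simplicial_def
  proof (intro ballI impI)
    fix x y assume x: "x \<in> Gvert P L" and y: "y \<in> Gvert P L" and xy: "x \<noteq> y \<and> Gadj I x y"
    show "\<exists>C. simplicial_clique (Gvert P L) (Gadj I) C \<and> x \<in> C \<and> y \<in> C"
    proof (cases x)
      case xp: (Inl p)
      show ?thesis
      proof (cases y)
        case yq: (Inl q)
        have "p \<in> P" "q \<in> P" "p \<noteq> q" using x y xy xp yq by (auto simp: Gvert_def)
        then obtain l where l: "l \<in> L" "I p l" "I q l" using pts by blast
        have "Inl p \<in> closed_nbhd (Gvert P L) (Gadj I) (Inr l)"
          using l \<open>p\<in>P\<close> by (simp add: nb_line)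
        moreover have "Inl q \<in> closed_nbhd (Gvert P L) (Gadj I) (Inr l)"
          using l \<open>q\<in>P\<close> by (simp add: nb_line)
        ultimately show ?thesis using simp_line[OF l(1)] xp yq by blast
      next
        case yl: (Inr l)
        have "p \<in> P" "l \<in> L" "I p l" using x y xy xp yl by (auto simp: Gvert_def)
        then have "Inl p \<in> closed_nbhd (Gvert P L) (Gadj I) (Inr l)" "Inr l \<in> closed_nbhd (Gvert P L) (Gadj I) (Inr l)"
          by (simp_all add: nb_line)
        then show ?thesis using simp_line[OF \<open>l\<in>L\<close>] xp yl by blast
      qed
    next
      case xl: (Inr l)
      show ?thesis
      proof (cases y)
        case yp: (Inl p)
        have "p \<in> P" "l \<in> L" "I p l" using x y xy xl yp by (auto simp: Gvert_def)
        then have "Inl p \<in> closed_nbhd (Gvert P L) (Gadj I) (Inr l)" "Inr l \<in> closed_nbhd (Gvert P L) (Gadj I) (Inr l)"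
          by (simp_all add: nb_line)
        then show ?thesis using simp_line[OF \<open>l\<in>L\<close>] xl yp by blast
      next
        case (Inr m)
        then show ?thesis using xy xl by simp
      qed
    qed
  qed
  have es2: "edge_simplicial (Gvert P L) (compl_graph (Gadj I))"
    unfolding edge_simplicial_def
  proof (intro ballI impI)
    fix x y assume x: "x \<in> Gvert P L" and y: "y \<in> Gvert P L"
      and xy: "x \<noteq> y \<and> compl_graph (Gadj I) x y"
    show "\<exists>C. simplicial_clique (Gvert P L) (compl_graph (Gadj I)) C \<and> x \<in> C \<and> y \<in> C"
    proof (cases x)
      case xp: (Inl p)
      show ?thesis
      proof (cases y)
        case (Inl q)
        then show ?thesis using xy xp by (simp add: compl_graph_def)
      next
        case yl: (Inr l)
        have "p \<in> P" "l \<in> L" "\<not> I p l" using x y xy xp yl by (auto simp: Gvert_def compl_graph_def)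
        then have "Inl p \<in> closed_nbhd (Gvert P L) (compl_graph (Gadj I)) (Inl p)" "Inr l \<in> closed_nbhd (Gvert P L) (compl_graph (Gadj I)) (Inl p)"
          by (simp_all add: nb_point)
        then show ?thesis using simp_point[OF \<open>p\<in>P\<close>] xp yl by blast
      qed
    next
      case xl: (Inr l)
      show ?thesis
      proof (cases y)
        case yp: (Inl p)
        have "p \<in> P" "l \<in> L" "\<not> I p l" using x y xy xl yp by (auto simp: Gvert_def compl_graph_def)
        then have "Inl p \<in> closed_nbhd (Gvert P L) (compl_graph (Gadj I)) (Inl p)" "Inr l \<in> closed_nbhd (Gvert P L) (compl_graph (Gadj I)) (Inl p)"
          by (simp_all add: nb_point)
        then show ?thesis using simp_point[OF \<open>p\<in>P\<close>] xl yp by blast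
      next
        case ym: (Inr m)
        have "l \<in> L" "m \<in> L" "l \<noteq> m" using x y xy xl ym by (auto simp: Gvert_def)
        then obtain p where p: "p \<in> P" "\<not> I p l" "\<not> I p m" using off_two[OF pp assms(2)] by blast
        have "Inr l \<in> closed_nbhd (Gvert P L) (compl_graph (Gadj I)) (Inl p)"
          using p \<open>l\<in>L\<close> by (simp add: nb_point)
        moreover have "Inr m \<in> closed_nbhd (Gvert P L) (compl_graph (Gadj I)) (Inl p)"
          using p \<open>m\<in>L\<close> by (simp add: nb_point)
        ultimately show ?thesis using simp_point[OF p(1)] xl ym by blast
      qed
    qed
  qed
  have mc: "maximal_clique (Gvert P L) (Gadj I) (Inl ` P)"
    unfolding maximal_clique_def
  proof (intro conjI allI impI)
    show "clique (Gvert P L) (Gadj I) (Inl ` P)" by (auto simp: clique_def Gvert_def)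
    fix D assume D: "clique (Gvert P L) (Gadj I) D \<and> Inl ` P \<subseteq> D"
    show "D = Inl ` P"
    proof (rule ccontr)
      assume "D \<noteq> Inl ` P"
      then obtain u where u: "u \<in> D" "u \<notin> Inl ` P" using D by blast
      then have "u \<in> Gvert P L" using D by (auto simp: clique_def)
      then obtain l where l: "u = Inr l" "l \<in> L" using u by (auto simp: Gvert_def)
      obtain p where p: "p \<in> P" "\<not> I p l" using offl[OF l(2)] by blast
      have "Inl p \<in> D" using D p by blast
      moreover have "Inl p \<noteq> u" using l by simp
      ultimately have "Gadj I (Inl p) u" using D u unfolding clique_def by blast
      then show False using l p by simp
    qed
  qed
  have ms: "maximal_stable_set (Gvert P L) (Gadj I) (Inr ` L)"
    unfolding maximal_stable_set_def
  proof (intro conjI allI impI)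
    show "stable_set (Gvert P L) (Gadj I) (Inr ` L)" by (auto simp: stable_set_def Gvert_def)
    fix T assume T: "stable_set (Gvert P L) (Gadj I) T \<and> Inr ` L \<subseteq> T"
    show "T = Inr ` L"
    proof (rule ccontr)
      assume "T \<noteq> Inr ` L"
      then obtain u where u: "u \<in> T" "u \<notin> Inr ` L" using T by blast
      then have "u \<in> Gvert P L" using T by (auto simp: stable_set_def)
      then obtain p where p: "u = Inl p" "p \<in> P" using u by (auto simp: Gvert_def)
      obtain l where l: "l \<in> L" "I p l" using online[OF p(2)] by blast
      have "Inr l \<in> T" using T l by blast
      moreover have "u \<noteq> Inr l" using p by simp
      ultimately have "\<not> Gadj I u (Inr l)" using T u unfolding stable_set_def by blast
      then show False using l p by simp
    qed
  qed
  have "\<not> CIS (Gvert P L) (Gadj I)"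
    unfolding CIS_def using mc ms by blast
  then show ?thesis using es1 es2 by (simp add: cap_edge_simplicial_def)
qed

end
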